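(* Let $X$ be an infinite domain, let $H$ be a countable collection of hypotheses $h:X\to\{0,1\}$, and let $\varepsilon\ge0$. Then for no $n\in\mathbb{N}$ is there an $\varepsilon$-differentially private $(1/3,1/3)$-accurate PAC learner for the point functions over $X$ using the hypothesis class $H$ with sample complexity $n$.
   Context: Point functions over $X$: $\{c_x:x\in X\}$ with $c_x(y)=1$ iff $y=x$. An $(\alpha,\beta)$-accurate PAC learner for a concept class $C$ using hypothesis class $H$ with sample complexity $n$ is an algorithm $L:(X\times\{0,1\})^n\to H$ such that for every $c\in C$ and every distribution $\mathcal{D}$ on $X$, given $(x_i,c(x_i))_{i=1}^n$ with $x_i$ i.i.d. from $\mathcal{D}$, it outputs $h\in H$ with $\Pr[\Pr_{x\sim\mathcal{D}}[h(x)\ne c(x)]\le\alpha]\ge1-\beta$. $\varepsilon$-differential privacy: for all $D,D'\in(X\times\{0,1\})^n$ differing in one row and all $T\subseteq H$, $\Pr[L(D)\in T]\le e^\varepsilon\Pr[L(D')\in T]$. *)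

theory Defs
  imports "HOL-Probability.Probability"
begin

definition point_function :: "'a \<Rightarrow> ('a \<Rightarrow> bool)" where
  "point_function x = (\<lambda>y. y = x)"

definition point_functions :: "('a \<Rightarrow> bool) set" where
  "point_functions = range point_function"

fun iid_sample :: "nat \<Rightarrow> 'a pmf \<Rightarrow> 'a list pmf" where
  "iid_sample 0 D = return_pmf []"
| "iid_sample (Suc n) D = bind_pmf D (\<lambda>x. map_pmf (Cons x) (iid_sample n D))"

definition neighbouring :: "'b list \<Rightarrow> 'b list \<Rightarrow> bool" where
  "neighbouring D D' \<longleftrightarrow> length D = length D' \<and>
     (\<exists>i < length D. \<forall>j < length D. j \<noteq> i \<longrightarrow> D ! j = D' ! j)"

definition uses_hypothesis_class ::
  "nat \<Rightarrow> (('a \<times> bool) list \<Rightarrow> ('a \<Rightarrow> bool) pmf) \<Rightarrow> ('a \<Rightarrow> bool) set \<Rightarrow> bool" where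
  "uses_hypothesis_class n L H \<longleftrightarrow> (\<forall>S. length S = n \<longrightarrow> set_pmf (L S) \<subseteq> H)"

definition differentially_private ::
  "real \<Rightarrow> nat \<Rightarrow> (('a \<times> bool) list \<Rightarrow> ('a \<Rightarrow> bool) pmf) \<Rightarrow> bool" where
  "differentially_private \<epsilon> n L \<longleftrightarrow>
     (\<forall>S S' T. length S = n \<longrightarrow> neighbouring S S' \<longrightarrow>
        measure_pmf.prob (L S) T \<le> exp \<epsilon> * measure_pmf.prob (L S') T)"

definition error :: "'a pmf \<Rightarrow> ('a \<Rightarrow> bool) \<Rightarrow> ('a \<Rightarrow> bool) \<Rightarrow> real" where
  "error D h c = measure_pmf.prob D {x. h x \<noteq> c x}"

definition PAC_learner ::
  "('a \<Rightarrow> bool) set \<Rightarrow> real \<Rightarrow> real \<Rightarrow> nat \<Rightarrow> (('a \<times> bool) list \<Rightarrow> ('a \<Rightarrow> bool) pmf) \<Rightarrow> bool" where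
  "PAC_learner C \<alpha> \<beta> n L \<longleftrightarrow>
     (\<forall>c\<in>C. \<forall>D :: 'a pmf.
        measure_pmf.prob
          (bind_pmf (iid_sample n D) (\<lambda>xs. L (map (\<lambda>x. (x, c x)) xs)))
          {h. error D h c \<le> \<alpha>} \<ge> 1 - \<beta>)"

end

theory Submission
  imports Defs
begin

lemma finite_approx:
  fixes p :: "'b pmf"
  assumes "d > 0"
  shows "\<exists>F. finite F \<and> measure_pmf.prob p F > 1 - d"
proof -
  have s: "pmf p summable_on UNIV"
    using abs_summable_equivalent[of "pmf p" UNIV] pmf_abs_summable[of p UNIV]
    by (metis abs_summable_summable)
  have "infsum (pmf p) UNIV = 1"
    using infsetsum_infsum[OF pmf_abs_summable[of p UNIV]] measure_pmf_conv_infsetsum[of p UNIV]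
    by simp
  with s have "(pmf p has_sum 1) UNIV"
    using summable_iff_has_sum_infsum by metis
  then have "(sum (pmf p) \<longlongrightarrow> 1) (finite_subsets_at_top UNIV)"
    by (simp add: has_sum_def)
  then have "eventually (\<lambda>F. dist (sum (pmf p) F) 1 < d) (finite_subsets_at_top UNIV)"
    using assms tendstoD by blast
  then obtain F where "finite F" "dist (sum (pmf p) F) 1 < d"
    by (auto simp: eventually_finite_subsets_at_top)
  then show ?thesis
    by (intro exI[of _ F]) (auto simp: measure_measure_pmf_finite dist_real_def)
qed

lemma pigeon:
  assumes "infinite (UNIV :: 'a set)" "finite (F :: ('a \<Rightarrow> bool) set)"
  shows "\<exists>x y. x \<noteq> y \<and> (\<forall>h\<in>F. h x = h y)"
proof (rule ccontr)
  assume a: "\<not> ?thesis"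
  define phi where "phi = (\<lambda>z::'a. restrict (\<lambda>h. h z) F)"
  have "inj phi"
  proof (rule injI)
    fix x y assume "phi x = phi y"
    then have "\<forall>h\<in>F. h x = h y" unfolding phi_def by (metis restrict_apply')
    with a show "x = y" by blast
  qed
  moreover have "range phi \<subseteq> PiE F (\<lambda>_. UNIV)" unfolding phi_def by auto
  moreover have "finite (PiE F (\<lambda>_. UNIV :: bool set))" using assms(2) by (simp add: finite_PiE)
  ultimately have "finite (UNIV :: 'a set)"
    by (meson finite_imageD finite_subset)
  with assms(1) show False by simp
qed

lemma iid_len: "xs \<in> set_pmf (iid_sample n D) \<Longrightarrow> length xs = n"
  by (induction n arbitrary: xs) auto

lemma bind_prob_le:
  assumes "\<And>x. x \<in> set_pmf M \<Longrightarrow> measure_pmf.prob (f x) A \<le> B" "B \<ge> 0"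
  shows "measure_pmf.prob (bind_pmf M f) A \<le> B"
proof -
  have "emeasure (measure_pmf (bind_pmf M f)) A = (\<integral>\<^sup>+x. emeasure (measure_pmf (f x)) A \<partial>M)"
    by simp
  also have "\<dots> \<le> (\<integral>\<^sup>+x. ennreal B \<partial>M)"
    by (intro nn_integral_mono_AE AE_pmfI)
       (use assms in \<open>auto simp: measure_pmf.emeasure_eq_measure\<close>)
  also have "\<dots> = ennreal B" by simp
  finally show ?thesis using assms(2)
    by (simp add: measure_pmf.emeasure_eq_measure)
qed

lemma dp_chain:
  assumes dp: "differentially_private \<epsilon> n L" and l: "length S = n" "length S' = n"
  shows "measure_pmf.prob (L S) T \<le> exp \<epsilon> ^ n * measure_pmf.prob (L S') T"
proof -
  define Sk where "Sk k = take k S' @ drop k S" for k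
  have len: "length (Sk k) = n" if "k \<le> n" for k using that l by (simp add: Sk_def)
  have "k \<le> n \<Longrightarrow> measure_pmf.prob (L S) T \<le> exp \<epsilon> ^ k * measure_pmf.prob (L (Sk k)) T" for k
  proof (induction k)
    case 0 then show ?case by (simp add: Sk_def)
  next
    case (Suc k)
    have nb: "neighbouring (Sk k) (Sk (Suc k))"
      unfolding neighbouring_def
    proof (intro conjI exI[of _ k])
      show "length (Sk k) = length (Sk (Suc k))" using len Suc.prems by simp
      show "k < length (Sk k)" using len Suc.prems by simp
      show "\<forall>j<length (Sk k). j \<noteq> k \<longrightarrow> Sk k ! j = Sk (Suc k) ! j"
        using Suc.prems l by (auto simp: Sk_def nth_append min_def)
    qed
    have "measure_pmf.prob (L (Sk k)) T \<le> exp \<epsilon> * measure_pmf.prob (L (Sk (Suc k))) T"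
      using dp nb len Suc.prems unfolding differentially_private_def by simp
    then have m: "exp \<epsilon> ^ k * measure_pmf.prob (L (Sk k)) T \<le> exp \<epsilon> ^ k * (exp \<epsilon> * measure_pmf.prob (L (Sk (Suc k))) T)"
      by (intro mult_left_mono) auto
    have "measure_pmf.prob (L S) T \<le> exp \<epsilon> ^ k * measure_pmf.prob (L (Sk k)) T"
      using Suc by simp
    from order_trans[OF this m] show ?case by (simp add: ac_simps)
  qed
  from this[of n] show ?thesis using l by (simp add: Sk_def)
qed

theorem theorem7p2:
  fixes H :: "('a \<Rightarrow> bool) set" and \<epsilon> :: real
  assumes "infinite (UNIV :: 'a set)"
    and "countable H"
    and "\<epsilon> \<ge> 0"
  shows "\<not> (\<exists>(n::nat) (L :: ('a \<times> bool) list \<Rightarrow> ('a \<Rightarrow> bool) pmf).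
            uses_hypothesis_class n L H \<and>
            differentially_private \<epsilon> n L \<and>
            PAC_learner point_functions (1/3) (1/3) n L)"
proof
  assume "\<exists>n L. uses_hypothesis_class n L H \<and> differentially_private \<epsilon> n L \<and>
            PAC_learner point_functions (1/3) (1/3) n L"
  then obtain n and L :: "('a \<times> bool) list \<Rightarrow> ('a \<Rightarrow> bool) pmf" where
    dp: "differentially_private \<epsilon> n L" and pac: "PAC_learner point_functions (1/3) (1/3) n L"
    by blast
  define S0 where "S0 = replicate n (undefined :: 'a, True)"
  define p where "p = L S0"
  define K where "K = exp \<epsilon> ^ n"
  have K: "K > 0" unfolding K_def by simp
  have len0: "length S0 = n" unfolding S0_def by simp
  obtain F where F: "finite F" "measure_pmf.prob p F > 1 - 1 / (3 * K)"
    using finite_approx[of "1 / (3 * K)" p] K by auto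
  obtain x y where xy: "x \<noteq> y" "\<forall>h\<in>F. h x = h y"
    using pigeon[OF assms(1) F(1)] by metis
  define D where "D = pmf_of_set {x, y}"
  define c where "c = point_function x"
  define G where "G = {h. error D h c \<le> 1/3}"
  have GF: "G \<subseteq> - F"
  proof
    fix h assume hG: "h \<in> G"
    show "h \<in> - F"
    proof
      assume "h \<in> F"
      then have hxy: "h x = h y" using xy by blast
      have "{x, y} \<inter> {z. h z \<noteq> c z} = (if h x then {y} else {x})"
        using hxy xy by (auto simp: c_def point_function_def)
      then have "error D h c = 1/2"
        using xy by (simp add: error_def D_def measure_pmf_of_set)
      with hG show False by (simp add: G_def)
    qed
  qed
  have "measure_pmf.prob p G \<le> measure_pmf.prob p (- F)"
    using GF by (intro measure_pmf.finite_measure_mono) auto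
  also have "\<dots> = 1 - measure_pmf.prob p F"
    using measure_pmf.prob_compl[of F p] by (simp add: Compl_eq_Diff_UNIV)
  finally have pG: "measure_pmf.prob p G \<le> 1 - measure_pmf.prob p F" .
  have "measure_pmf.prob (bind_pmf (iid_sample n D) (\<lambda>xs. L (map (\<lambda>x. (x, c x)) xs))) G
        \<le> K * (1 - measure_pmf.prob p F)"
  proof (rule bind_prob_le)
    fix xs assume "xs \<in> set_pmf (iid_sample n D)"
    then have "length (map (\<lambda>x. (x, c x)) xs) = n" using iid_len by simp
    have "measure_pmf.prob (L (map (\<lambda>x. (x, c x)) xs)) G \<le> K * measure_pmf.prob p G"
      unfolding p_def K_def by (rule dp_chain[OF dp \<open>length (map (\<lambda>x. (x, c x)) xs) = n\<close> len0])
    also have "\<dots> \<le> K * (1 - measure_pmf.prob p F)"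
      using pG K by (intro mult_left_mono) auto
    finally show "measure_pmf.prob (L (map (\<lambda>x. (x, c x)) xs)) G \<le> K * (1 - measure_pmf.prob p F)" .
  next
    show "0 \<le> K * (1 - measure_pmf.prob p F)"
      using K measure_pmf.prob_le_1[of p F] by (intro mult_nonneg_nonneg) auto
  qed
  also have "\<dots> < K * (1 / (3 * K))"
    using K F(2) by (intro mult_strict_left_mono) auto
  also have "\<dots> = 1/3" using K by simp
  finally have lt: "measure_pmf.prob (bind_pmf (iid_sample n D) (\<lambda>xs. L (map (\<lambda>x. (x, c x)) xs))) G < 1/3" .
  have "c \<in> point_functions" by (simp add: c_def point_functions_def)
  with pac have "measure_pmf.prob (bind_pmf (iid_sample n D) (\<lambda>xs. L (map (\<lambda>x. (x, c x)) xs))) G \<ge> 1 - 1/3"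
    unfolding PAC_learner_def G_def by blast
  with lt show False by simp
qed

end
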